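(* Consider the generic SURQT model (6) described in the context, and let $\mathbf{Q}_1=\frac{\partial\mathbf{f}(\mathbf 0)}{\partial\mathbf{x}}-\mathbf{D}_\theta$. If $s(\mathbf{Q}_1)<0$, then the rumor-free equilibrium $\mathbf{E}_0=(\mathbf 0,\mathbf 1)$ attracts $\Omega$: every solution with initial value in $\Omega$ satisfies $\mathbf{R}(t)\to\mathbf 0$ and $\mathbf{T}(t)\to\mathbf 1$ as $t\to\infty$. Consequently $R(t)=\frac1N\sum_iR_i(t)\to0$ and $T(t)=\frac1N\sum_iT_i(t)\to1$.
   Context: $V=\{1,\dots,N\}$; $G_R=(V,E_R)$ and $G_T=(V,E_T)$ are strongly connected directed graphs. $\theta_i>0,\delta_i>0$; $\mathbf{D}_\theta=\mathrm{diag}(\theta_i)$. The functions $f_i^T,g_i^R:\mathbb{R}^N\to\mathbb{R}$ satisfy: (C1) $f_i^T$ depends on $x_j$ iff $(i,j)\in E_R$, $g_i^R$ depends on $x_j$ iff $(i,j)\in E_T$; (C2) $f_i^T(\mathbf 0)=g_i^R(\mathbf 0)=0$; (C3) twice continuously differentiable; (C4) strictly increasing in each argument; (C5) concave. $\mathbf{f}=(f_1^T,\dots,f_N^T)^T$ and $\frac{\partial\mathbf{f}(\mathbf 0)}{\partial\mathbf x}$ is its Jacobian at the origin. $s(\mathbf{A})$ is the maximum real part of an eigenvalue of $\mathbf{A}$. The generic SURQT model (6) is, for $i=1,\dots,N$, \[ \frac{dR_i}{dt}=T_i f_i^T(\mathbf{R})-R_i g_i^R(\mathbf{T})-\theta_iR_i,\qquad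 \frac{dT_i}{dt}=R_i g_i^R(\mathbf{T})-T_i f_i^T(\mathbf{R})+\delta_i(1-R_i-T_i), \] on $\Omega=\{(x_1,\dots,x_{2N})\in\mathbb{R}_+^{2N}: x_i+x_{N+i}\le1\}$. *)

theory Defs
  imports "HOL-Analysis.Analysis"
begin

definition strongly_connected :: "('n \<times> 'n) set \<Rightarrow> bool" where
  "strongly_connected E \<longleftrightarrow> (\<forall>i j. (i, j) \<in> E\<^sup>*)"

definition depends_on :: "(real^'n \<Rightarrow> real) \<Rightarrow> 'n \<Rightarrow> bool" where
  "depends_on h j \<longleftrightarrow> (\<exists>x y. (\<forall>k. k \<noteq> j \<longrightarrow> x $ k = y $ k) \<and> h x \<noteq> h y)"

definition twice_cont_diff :: "(real^'n \<Rightarrow> real) \<Rightarrow> bool" where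
  "twice_cont_diff h \<longleftrightarrow>
     (\<exists>D :: (real^'n) \<Rightarrow> ((real^'n) \<Rightarrow>\<^sub>L real).
      \<exists>D2 :: (real^'n) \<Rightarrow> ((real^'n) \<Rightarrow>\<^sub>L ((real^'n) \<Rightarrow>\<^sub>L real)).
        (\<forall>x. (h has_derivative blinfun_apply (D x)) (at x)) \<and>
        (\<forall>x. (D has_derivative blinfun_apply (D2 x)) (at x)) \<and>
        continuous_on UNIV D2)"

definition strictly_incr_in :: "(real^'n \<Rightarrow> real) \<Rightarrow> 'n \<Rightarrow> bool" where
  "strictly_incr_in h j \<longleftrightarrow> (\<forall>x (t::real). t > 0 \<longrightarrow> h x < h (x + t *\<^sub>R axis j 1))"

definition complex_eigenvalue :: "real^'n^'n \<Rightarrow> complex \<Rightarrow> bool" where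
  "complex_eigenvalue A l \<longleftrightarrow>
     (\<exists>v :: complex^'n. v \<noteq> 0 \<and> (\<chi> i j. complex_of_real (A $ i $ j)) *v v = l *s v)"

definition spectral_abscissa :: "real^'n^'n \<Rightarrow> real" where
  "spectral_abscissa A = Max (Re ` {l. complex_eigenvalue A l})"

definition diag_mat :: "real^'n \<Rightarrow> real^'n^'n" where
  "diag_mat d = (\<chi> i j. if i = j then d $ i else 0)"

end

theory Submission
  imports Defs
begin


lemma eig_indep:
  fixes A :: "complex^'n^'n" and \<mu> :: "complex^'n \<Rightarrow> complex"
  assumes "finite B" "\<forall>v\<in>B. v \<noteq> 0 \<and> A *v v = \<mu> v *s v" "inj_on \<mu> B"
  shows "vec.independent B"
  using assms
proof (induction B rule: finite_induct)
  case empty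
  then show ?case by (simp add: vec.independent_empty)
next
  case (insert b B)
  have indB: "vec.independent B" using insert by (auto simp: inj_on_insert)
  have "b \<notin> vec.span B"
  proof
    assume "b \<in> vec.span B"
    then obtain u where u: "b = (\<Sum>v\<in>B. u v *s v)"
      using vec.span_finite[OF insert(1)] by auto
    have "A *v b = (\<Sum>v\<in>B. u v *s (A *v v))"
      unfolding u by (simp add: vec.linear_sum[OF vec.linear_axioms] vec.scale)
    also have "\<dots> = (\<Sum>v\<in>B. (u v * \<mu> v) *s v)"
      using insert(4) by (intro sum.cong) auto
    finally have e1: "A *v b = (\<Sum>v\<in>B. (u v * \<mu> v) *s v)" .
    have sc: "c *s (\<Sum>v\<in>B. u v *s v) = (\<Sum>v\<in>B. (u v * c) *s v)" for c
      by (simp add: vec.scale_sum_right mult.commute)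
    have "A *v b = \<mu> b *s b" using insert(4) by simp
    then have e2: "A *v b = (\<Sum>v\<in>B. (u v * \<mu> b) *s v)"
      using sc[of "\<mu> b"] u by metis
    have "(\<Sum>v\<in>B. (u v * (\<mu> v - \<mu> b)) *s v) = 0"
      using e1 e2 by (simp add: algebra_simps sum_subtractf vector_sadd_rdistrib)
    then have "\<forall>v\<in>B. u v * (\<mu> v - \<mu> b) = 0"
      using indB[unfolded vec.independent_explicit, THEN conjunct2, rule_format, of "\<lambda>v. u v * (\<mu> v - \<mu> b)"] by blast
    moreover have "\<forall>v\<in>B. \<mu> v \<noteq> \<mu> b"
      using insert(2,5) by (auto simp: inj_on_def)
    ultimately have "\<forall>v\<in>B. u v = 0" by simp
    then have "b = 0" using u by simp
    then show False using insert(4) by simp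
  qed
  then show ?case using vec.independent_insertI indB by blast
qed

lemma eig_finite:
  fixes A :: "complex^'n^'n"
  shows "finite {l. \<exists>v. v \<noteq> 0 \<and> A *v v = l *s v}" (is "finite ?E")
proof (rule ccontr)
  assume inf: "infinite ?E"
  then obtain L where L: "L \<subseteq> ?E" "finite L" "card L = Suc CARD('n)"
    using infinite_arbitrarily_large[OF inf, of "Suc CARD('n)"] by blast
  define ev where "ev l = (SOME v. v \<noteq> 0 \<and> A *v v = l *s v)" for l
  have ev: "ev l \<noteq> 0 \<and> A *v ev l = l *s ev l" if "l \<in> ?E" for l
    using someI_ex[of "\<lambda>v. v \<noteq> 0 \<and> A *v v = l *s v"] that unfolding ev_def by auto
  have inj: "inj_on ev L"
  proof (rule inj_onI)
    fix x y assume "x \<in> L" "y \<in> L" "ev x = ev y"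
    moreover have "x \<in> ?E" "y \<in> ?E" using L(1) \<open>x \<in> L\<close> \<open>y \<in> L\<close> by auto
    ultimately have e1: "A *v ev x = x *s ev x" and e2: "A *v ev y = y *s ev y" using ev by blast+
    have "x *s ev x = y *s ev x" using e1 e2 \<open>ev x = ev y\<close> by (simp only:)
    then have "(x - y) *s ev x = 0" by (simp add: vec.scale_left_diff_distrib)
    moreover have "ev x \<noteq> 0" using ev \<open>x \<in> ?E\<close> by blast
    ultimately show "x = y" by (simp add: vec.scale_eq_0_iff)
  qed
  define \<mu> where "\<mu> = the_inv_into L ev"
  have mu: "\<mu> (ev l) = l" if "l \<in> L" for l
    using the_inv_into_f_f[OF inj that] unfolding \<mu>_def .
  have "vec.independent (ev ` L)"
  proof (rule eig_indep[where A=A and \<mu>=\<mu>])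
    show "finite (ev ` L)" using L by simp
    show "\<forall>v\<in>ev ` L. v \<noteq> 0 \<and> A *v v = \<mu> v *s v"
    proof
      fix v assume "v \<in> ev ` L"
      then obtain l where l: "l \<in> L" "v = ev l" by blast
      then have lE: "l \<in> ?E" using L(1) by blast
      then show "v \<noteq> 0 \<and> A *v v = \<mu> v *s v" using ev[OF lE] mu[OF l(1)] l(2) by simp
    qed
    show "inj_on \<mu> (ev ` L)" using mu by (auto simp: inj_on_def)
  qed
  then have "card (ev ` L) \<le> vec.dim (ev ` L)"
    using vec.independent_bound_general by blast
  also have "\<dots> \<le> vec.dim (UNIV :: (complex^'n) set)" by (rule vec.dim_subset) simp
  also have "\<dots> = CARD('n)" by (rule vec_dim_card)
  finally show False using card_image[OF inj] L by simp
qed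



lemma ceig_finite: "finite {l. complex_eigenvalue A l}"
  unfolding complex_eigenvalue_def using eig_finite[of "\<chi> i j. complex_of_real (A $ i $ j)"] by simp

lemma ceig_le_sa:
  assumes "complex_eigenvalue A l"
  shows "Re l \<le> spectral_abscissa A"
  unfolding spectral_abscissa_def using assms ceig_finite
  by (intro Max_ge) auto

lemma mat_vec_nth: "(mat c *v x) $ i = c * (x $ i :: real)"
proof -
  have "(\<Sum>j\<in>UNIV. (if i = j then c else 0) * x $ j) = c * x $ i"
    by (simp add: if_distrib[where f="\<lambda>a. a * _"] cong: if_cong)
  then show ?thesis by (simp add: matrix_vector_mult_def mat_def)
qed

lemma real_eig_ceig:
  fixes Q :: "real^'n^'n"
  assumes "v \<noteq> 0" "Q *v v = \<mu> *\<^sub>R v"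
  shows "complex_eigenvalue Q (complex_of_real \<mu>)"
  unfolding complex_eigenvalue_def
proof (intro exI conjI)
  let ?v = "\<chi> i. complex_of_real (v $ i)"
  show "?v \<noteq> 0" using assms(1) by (auto simp: vec_eq_iff)
  have "(Q *v v) $ i = \<mu> * v $ i" for i using assms(2) by simp
  then show "(\<chi> i j. complex_of_real (Q $ i $ j)) *v ?v = complex_of_real \<mu> *s ?v"
    by (auto simp: vec_eq_iff matrix_vector_mult_def simp flip: of_real_mult of_real_sum)
qed

lemma transpose_eig_ceig:
  fixes Q :: "real^'n^'n"
  assumes "z \<noteq> 0" "transpose Q *v z = \<mu> *\<^sub>R z"
  shows "complex_eigenvalue Q (complex_of_real \<mu>)"
proof -
  define N where "N = Q - mat \<mu>"
  have tN: "transpose N = transpose Q - mat \<mu>"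
    unfolding N_def by (simp add: transpose_def mat_def vec_eq_iff)
  have "transpose N *v z = 0"
    unfolding tN using assms(2) by (simp add: matrix_vector_mult_diff_rdistrib vec_eq_iff mat_vec_nth)
  then have "\<not> invertible (transpose N)"
    using assms(1) invertible_left_inverse matrix_left_invertible_ker by blast
  then have "det N = 0" using invertible_det_nz det_transpose by metis
  then have "\<not> invertible N" using invertible_det_nz by blast
  then obtain v where v: "v \<noteq> 0" "N *v v = 0"
    using invertible_left_inverse matrix_left_invertible_ker by blast
  then have "Q *v v = \<mu> *\<^sub>R v"
    unfolding N_def by (simp add: matrix_vector_mult_diff_rdistrib vec_eq_iff mat_vec_nth)
  then show ?thesis using real_eig_ceig v(1) by blast
qed



lemma mv_scaleR: "(P::real^'n^'n) *v (a *\<^sub>R z) = a *\<^sub>R (P *v z)"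
  by (simp add: vec_eq_iff matrix_vector_mult_def sum_distrib_left algebra_simps)

lemma mv_add: "(P::real^'n^'n) *v (x + y) = P *v x + P *v y"
  by (simp add: matrix_vector_right_distrib)

lemma mv_nonneg:
  fixes P :: "real^'n^'n"
  assumes "\<forall>i j. P$i$j \<ge> 0" "\<forall>i. z$i \<ge> 0"
  shows "(P *v z)$i \<ge> 0"
  using assms by (auto simp: matrix_vector_mult_def intro!: sum_nonneg)

lemma mv_mono:
  fixes P :: "real^'n^'n"
  assumes "\<forall>i j. P$i$j \<ge> 0" "\<forall>i. u$i \<le> v$i"
  shows "(P *v u)$i \<le> (P *v v)$i"
  using assms by (auto simp: matrix_vector_mult_def intro!: sum_mono mult_left_mono)

lemma cont_mv: "continuous_on S (\<lambda>z. (P::real^'n^'n) *v z)"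
  by (intro linear_continuous_on matrix_vector_mul_bounded_linear)

lemma pf:
  fixes M :: "real^'n^'n"
  assumes off: "\<forall>i j. i \<noteq> j \<longrightarrow> M$i$j \<ge> 0"
    and y0: "\<forall>i. y$i \<ge> 0" and yne: "y \<noteq> 0" and My: "\<forall>i. (M *v y)$i \<ge> 0"
  shows "\<exists>\<mu> z. \<mu> \<ge> 0 \<and> z \<noteq> 0 \<and> M *v z = \<mu> *\<^sub>R z"
proof -
  define c where "c = 1 + (\<Sum>i\<in>UNIV. \<bar>M$i$i\<bar>)"
  have cpos: "c > 0" unfolding c_def by (simp add: add_pos_nonneg sum_nonneg)
  have cge: "\<bar>M$i$i\<bar> \<le> c" for i
  proof -
    have "\<bar>M$i$i\<bar> \<le> (\<Sum>i\<in>UNIV. \<bar>M$i$i\<bar>)"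
      by (rule member_le_sum) auto
    then show ?thesis unfolding c_def by simp
  qed
  define P where "P = M + mat c"
  have Pij: "P$i$j = M$i$j + (if i = j then c else 0)" for i j
    unfolding P_def by (simp add: mat_def)
  have Pnn: "\<forall>i j. P$i$j \<ge> 0"
  proof (intro allI)
    fix i j show "P$i$j \<ge> 0"
      using off cge[of i] unfolding Pij by (cases "i = j") auto
  qed
  have Pv: "(P *v z)$i = (M *v z)$i + c * z$i" for z i
    unfolding P_def by (simp add: matrix_vector_mult_add_rdistrib mat_vec_nth)
  define S where "S = {z. (\<forall>i. 0 \<le> z$i) \<and> (\<Sum>i\<in>UNIV. z$i) = 1 \<and> (\<forall>i. c * z$i \<le> (P *v z)$i)}"
  define sm where "sm z = (\<Sum>i\<in>UNIV. z$i)" for z :: "real^'n"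
  have cont_sm: "continuous_on A (\<lambda>z. sm (f z))" if "continuous_on A f" for A f
    unfolding sm_def by (intro continuous_intros that)
  have smS: "sm (P *v z) \<ge> c" if "z \<in> S" for z
  proof -
    have "c = (\<Sum>i\<in>UNIV. c * z$i)" using that by (simp add: S_def sum_distrib_left[symmetric])
    also have "\<dots> \<le> sm (P *v z)" unfolding sm_def using that by (intro sum_mono) (auto simp: S_def)
    finally show ?thesis .
  qed
  define \<phi> where "\<phi> z = (1 / sm (P *v z)) *\<^sub>R (P *v z)" for z
  have "compact S \<and> convex S \<and> S \<noteq> {} \<and> continuous_on S \<phi> \<and> \<phi> \<in> S \<rightarrow> S"
  proof (intro conjI)
    have clo: "closed S"
      unfolding S_def
      by (intro closed_Collect_conj closed_Collect_all closed_Collect_le closed_Collect_eq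
          continuous_intros cont_mv)
    have "S \<subseteq> cbox 0 (\<chi> i. 1)"
    proof
      fix z assume z: "z \<in> S"
      have "z$i \<le> 1" for i
      proof -
        have "z$i \<le> (\<Sum>i\<in>UNIV. z$i)" using z by (intro member_le_sum) (auto simp: S_def)
        then show ?thesis using z by (simp add: S_def)
      qed
      then show "z \<in> cbox 0 (\<chi> i. 1)" using z by (auto simp: mem_box_cart S_def)
    qed
    then have "bounded S" using bounded_subset bounded_cbox by blast
    then show "compact S" using clo compact_eq_bounded_closed by blast
    show "convex S"
      unfolding convex_def
    proof (intro ballI allI impI)
      fix x z and u v :: real assume xz: "x \<in> S" "z \<in> S" and uv: "0 \<le> u" "0 \<le> v" "u + v = 1"
      have a: "\<forall>i. 0 \<le> (u *\<^sub>R x + v *\<^sub>R z)$i" using xz uv by (auto simp: S_def)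
      have b: "(\<Sum>i\<in>UNIV. (u *\<^sub>R x + v *\<^sub>R z)$i) = 1"
        using xz uv by (simp add: S_def sum.distrib sum_distrib_left[symmetric])
      have "c * (u *\<^sub>R x + v *\<^sub>R z)$i \<le> (P *v (u *\<^sub>R x + v *\<^sub>R z))$i" for i
      proof -
        have "c * x$i \<le> (P *v x)$i" "c * z$i \<le> (P *v z)$i" using xz by (auto simp: S_def)
        then have "u * (c * x$i) + v * (c * z$i) \<le> u * (P *v x)$i + v * (P *v z)$i"
          using uv by (intro add_mono mult_left_mono) auto
        then show ?thesis by (simp add: mv_add mv_scaleR algebra_simps)
      qed
      then show "u *\<^sub>R x + v *\<^sub>R z \<in> S" using a b by (simp add: S_def)
    qed
    have smy: "sm y > 0"
    proof -
      obtain i where "y$i \<noteq> 0" using yne by (auto simp: vec_eq_iff)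
      then have "0 < y$i" using y0 by (metis less_eq_real_def)
      also have "y$i \<le> sm y" unfolding sm_def using y0 by (intro member_le_sum) auto
      finally show ?thesis .
    qed
    have "(1 / sm y) *\<^sub>R y \<in> S"
    proof -
      have "c * ((1 / sm y) *\<^sub>R y)$i \<le> (P *v ((1 / sm y) *\<^sub>R y))$i" for i
        using My[rule_format, of i] smy by (simp add: mv_scaleR Pv divide_le_cancel field_simps)
      moreover have "(\<Sum>i\<in>UNIV. ((1 / sm y) *\<^sub>R y)$i) = 1"
        using smy by (simp add: sm_def sum_divide_distrib[symmetric])
      ultimately show ?thesis using y0 smy by (simp add: S_def)
    qed
    then show "S \<noteq> {}" by blast
    show "continuous_on S \<phi>"
      unfolding \<phi>_def
      using smS cpos
      by (intro continuous_intros cont_mv cont_sm) force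
    show "\<phi> \<in> S \<rightarrow> S"
    proof
      fix z assume z: "z \<in> S"
      define s where "s = sm (P *v z)"
      have s: "s \<ge> c" using smS[OF z] by (simp add: s_def)
      have z0: "\<forall>i. 0 \<le> z$i" and zc: "\<forall>i. c * z$i \<le> (P *v z)$i" using z by (auto simp: S_def)
      have Pz0: "\<forall>i. 0 \<le> (P *v z)$i" using mv_nonneg[OF Pnn z0] by blast
      have a: "\<forall>i. 0 \<le> (\<phi> z)$i" using Pz0 s cpos by (simp add: \<phi>_def s_def[symmetric])
      have b: "(\<Sum>i\<in>UNIV. (\<phi> z)$i) = 1"
      proof -
        have "(\<Sum>i\<in>UNIV. (\<phi> z)$i) = (1/s) * s"
          unfolding \<phi>_def s_def sm_def by (simp add: sum_distrib_left)
        then show ?thesis using s cpos by simp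
      qed
      have "(P *v (c *\<^sub>R z))$i \<le> (P *v (P *v z))$i" for i
        using zc by (intro mv_mono[OF Pnn]) auto
      then have "c * (P *v z)$i \<le> (P *v (P *v z))$i" for i by (simp add: mv_scaleR)
      then have "c * (\<phi> z)$i \<le> (P *v \<phi> z)$i" for i
        using s cpos by (simp add: \<phi>_def s_def[symmetric] mv_scaleR divide_right_mono)
      then show "\<phi> z \<in> S" using a b by (simp add: S_def)
    qed
  qed
  then obtain z where z: "z \<in> S" "\<phi> z = z" using brouwer[of S \<phi>] by blast
  define s where "s = sm (P *v z)"
  have s: "s \<ge> c" using smS[OF z(1)] by (simp add: s_def)
  have "P *v z = s *\<^sub>R ((1/s) *\<^sub>R (P *v z))" using s cpos by simp
  also have "\<dots> = s *\<^sub>R z" using z(2) unfolding \<phi>_def s_def by simp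
  finally have "P *v z = s *\<^sub>R z" .
  then have "M *v z = (s - c) *\<^sub>R z"
    using Pv by (simp add: vec_eq_iff algebra_simps)
  moreover have "z \<noteq> 0" using z(1) by (auto simp: S_def)
  ultimately show ?thesis using s by (intro exI[of _ "s - c"] exI[of _ z]) simp
qed



lemma mv_diag_bound:
  fixes M :: "real^'n^'n"
  assumes off: "\<forall>i j. i \<noteq> j \<longrightarrow> M$i$j \<ge> 0" and v0: "\<forall>i. v$i \<ge> 0"
  shows "(M *v v)$i \<ge> M$i$i * v$i"
proof -
  have "(M *v v)$i = M$i$i * v$i + (\<Sum>j\<in>UNIV-{i}. M$i$j * v$j)"
    unfolding matrix_vector_mult_def by (simp add: sum.remove[of UNIV i])
  moreover have "(\<Sum>j\<in>UNIV-{i}. M$i$j * v$j) \<ge> 0"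
    using off v0 by (intro sum_nonneg) auto
  ultimately show ?thesis by simp
qed

lemma wexist:
  fixes Q :: "real^'n^'n"
  assumes off: "\<forall>i j. i \<noteq> j \<longrightarrow> Q$i$j \<ge> 0"
    and sa: "spectral_abscissa Q < 0"
  shows "\<exists>w. (\<forall>i. w$i > 0) \<and> (\<forall>j. (\<Sum>i\<in>UNIV. w$i * Q$i$j) = -1)"
proof -
  define M where "M = transpose Q"
  have offM: "\<forall>i j. i \<noteq> j \<longrightarrow> M$i$j \<ge> 0" using off by (simp add: M_def transpose_def)
  have noeig: "M *v z \<noteq> \<mu> *\<^sub>R z" if "\<mu> \<ge> 0" "z \<noteq> 0" for \<mu> z
  proof
    assume "M *v z = \<mu> *\<^sub>R z"
    then have "complex_eigenvalue Q (complex_of_real \<mu>)"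
      using transpose_eig_ceig that(2) unfolding M_def by blast
    then have "\<mu> \<le> spectral_abscissa Q" using ceig_le_sa by fastforce
    then show False using sa that(1) by simp
  qed
  have noy: "\<not> ((\<forall>i. y$i \<ge> 0) \<and> y \<noteq> 0 \<and> (\<forall>i. (M *v y)$i \<ge> 0))" for y
    using pf[OF offM, of y] noeig by blast
  have "\<forall>x. M *v x = 0 \<longrightarrow> x = 0" using noeig[of 0] by auto
  then have "invertible M" using invertible_left_inverse matrix_left_invertible_ker by blast
  then obtain B where B: "M ** B = mat 1" unfolding invertible_def by blast
  define w where "w = B *v (\<chi> i. -1)"
  have Mw: "M *v w = (\<chi> i. -1)"
    unfolding w_def by (simp add: matrix_vector_mul_assoc B)
  define wp where "wp = (\<chi> i. max (w$i) 0)"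
  define u where "u = wp - w"
  have u0: "\<forall>i. u$i \<ge> 0" by (simp add: u_def wp_def)
  have Mu: "(M *v u)$i = (M *v wp)$i + 1" for i
    unfolding u_def by (simp add: matrix_vector_mult_diff_distrib Mw)
  have "(M *v u)$i \<ge> 0" for i
  proof (cases "w$i < 0")
    case True
    have "(M *v wp)$i \<ge> M$i$i * wp$i" by (rule mv_diag_bound[OF offM]) (simp add: wp_def)
    then show ?thesis using True Mu[of i] by (simp add: wp_def)
  next
    case False
    have "(M *v u)$i \<ge> M$i$i * u$i" by (rule mv_diag_bound[OF offM u0])
    then show ?thesis using False by (simp add: u_def wp_def)
  qed
  then have "u = 0" using noy[of u] u0 by blast
  have w0: "\<forall>i. w$i \<ge> 0"
  proof
    fix i have "u$i = 0" using \<open>u = 0\<close> by simp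
    then show "w$i \<ge> 0" by (simp add: u_def wp_def max_def split: if_splits)
  qed
  have wpos: "w$i > 0" for i
  proof (rule ccontr)
    assume "\<not> w$i > 0"
    then have "w$i = 0" using w0[rule_format, of i] by linarith
    moreover have "(M *v w)$i \<ge> M$i$i * w$i" by (rule mv_diag_bound[OF offM w0])
    ultimately show False using Mw by simp
  qed
  have "(\<Sum>i\<in>UNIV. w$i * Q$i$j) = (M *v w)$j" for j
    unfolding M_def matrix_vector_mult_def transpose_def
    by (simp add: mult.commute[of "w$_"])
  then have "\<forall>j. (\<Sum>i\<in>UNIV. w$i * Q$i$j) = -1" using Mw by simp
  then show ?thesis using wpos by blast
qed



lemma mono_step:
  fixes h :: "real^'n \<Rightarrow> real"
  assumes H: "\<forall>j. depends_on h j \<longrightarrow> strictly_incr_in h j" and t: "t \<ge> 0"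
  shows "h x \<le> h (x + t *\<^sub>R axis j 1)"
proof (cases "depends_on h j")
  case True
  then show ?thesis using H t unfolding strictly_incr_in_def
  proof (cases "t = 0")
    case False
    then have "t > 0" using t by simp
    then show ?thesis using H True unfolding strictly_incr_in_def by (blast intro: less_imp_le)
  qed simp
next
  case False
  have "\<forall>k. k \<noteq> j \<longrightarrow> x $ k = (x + t *\<^sub>R axis j 1) $ k" by (simp add: axis_def)
  then have "h x = h (x + t *\<^sub>R axis j 1)" using False unfolding depends_on_def by blast
  then show ?thesis by simp
qed

lemma mono_h:
  fixes h :: "real^'n \<Rightarrow> real"
  assumes H: "\<forall>j. depends_on h j \<longrightarrow> strictly_incr_in h j" and le: "\<forall>k. x$k \<le> y$k"
  shows "h x \<le> h y"
proof -
  define z where "z S = (\<chi> k. if k \<in> S then y$k else x$k)" for S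
  have zS: "finite S \<Longrightarrow> h x \<le> h (z S)" for S
  proof (induction S rule: finite_induct)
    case empty
    then show ?case by (simp add: z_def)
  next
    case (insert j S)
    have "z (insert j S) = z S + (y$j - x$j) *\<^sub>R axis j 1"
      using insert(2) by (auto simp: z_def vec_eq_iff axis_def)
    then have "h (z S) \<le> h (z (insert j S))"
      using mono_step[OF H, of "y$j - x$j" "z S" j] le by simp
    then show ?case using insert by simp
  qed
  moreover have "z UNIV = y" by (simp add: z_def vec_eq_iff)
  ultimately show ?thesis using zS[of UNIV] by simp
qed

lemma line_deriv:
  fixes h :: "real^'n \<Rightarrow> real"
  assumes "(h has_derivative L) (at 0)"
  shows "((\<lambda>s. h (s *\<^sub>R v)) has_real_derivative L v) (at 0)"
proof -
  have g: "((\<lambda>s::real. s *\<^sub>R v) has_derivative (\<lambda>s. s *\<^sub>R v)) (at 0)"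
    by (intro derivative_eq_intros) auto
  have "((\<lambda>s. h (s *\<^sub>R v)) has_derivative (\<lambda>s. L (s *\<^sub>R v))) (at 0)"
    using has_derivative_compose[OF g] assms by simp
  moreover have "linear L" using assms has_derivative_linear by blast
  ultimately have "((\<lambda>s. h (s *\<^sub>R v)) has_derivative (\<lambda>s. s * L v)) (at 0)"
    by (simp add: linear_cmul)
  then show ?thesis unfolding has_field_derivative_def by (simp add: mult.commute[of _ "L v"])
qed

lemma deriv_nonneg_of_mono:
  fixes h :: "real^'n \<Rightarrow> real"
  assumes "(h has_derivative L) (at 0)" and mono: "\<forall>s>0. h 0 \<le> h (s *\<^sub>R v)"
  shows "L v \<ge> 0"
proof (rule ccontr)
  assume "\<not> L v \<ge> 0"
  then have "L v < 0" by simp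
  from DERIV_neg_dec_right[OF line_deriv[OF assms(1)] this]
  obtain d where d: "d > 0" "\<forall>s>0. s < d \<longrightarrow> h (0 *\<^sub>R v) > h ((0 + s) *\<^sub>R v)" by blast
  then have "h 0 > h ((d/2) *\<^sub>R v)" by simp
  moreover have "h 0 \<le> h ((d/2) *\<^sub>R v)" using mono d(1) by simp
  ultimately show False by simp
qed

lemma concave_le_deriv:
  fixes h :: "real^'n \<Rightarrow> real"
  assumes cc: "concave_on UNIV h" and h0: "h 0 = 0" and d: "(h has_derivative L) (at 0)"
  shows "h x \<le> L x"
proof -
  have D: "((\<lambda>s. h (s *\<^sub>R x)) has_real_derivative L x) (at 0)" by (rule line_deriv[OF d])
  then have lim: "((\<lambda>s. (h ((0 + s) *\<^sub>R x) - h (0 *\<^sub>R x)) / s) \<longlongrightarrow> L x) (at 0)"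
    unfolding DERIV_def .
  then have lim': "((\<lambda>s. h (s *\<^sub>R x) / s) \<longlongrightarrow> L x) (at_right 0)"
    using h0 by (simp add: filterlim_at_split)
  have "\<forall>\<^sub>F s in at_right 0. h x \<le> h (s *\<^sub>R x) / s"
    unfolding eventually_at_right[OF zero_less_one]
  proof (intro exI[of _ 1] conjI allI impI)
    fix s :: real assume s: "0 < s" "s < 1"
    have "h ((1 - s) *\<^sub>R 0 + s *\<^sub>R x) \<ge> (1 - s) * h 0 + s * h x"
      using concave_onD[OF cc, of s 0 x] s by simp
    then have "s * h x \<le> h (s *\<^sub>R x)" using h0 by simp
    then show "h x \<le> h (s *\<^sub>R x) / s" using s by (simp add: field_simps)
  qed simp
  show ?thesis
    by (rule tendsto_le[OF trivial_limit_at_right_real lim' tendsto_const]) fact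
qed



lemma gronwall_lin:
  fixes y y' :: "real \<Rightarrow> real"
  assumes t01: "t0 \<le> t1"
    and der: "\<forall>t\<in>{t0..t1}. (y has_real_derivative y' t) (at t within {t0..t1})"
    and le: "\<forall>t\<in>{t0..t1}. y' t \<le> a * y t"
  shows "y t1 \<le> y t0 * exp (a * (t1 - t0))"
proof -
  define z where "z t = y t * exp (- a * t)" for t
  have cy: "continuous_on {t0..t1} y"
    unfolding continuous_on_eq_continuous_within
  proof
    fix t assume "t \<in> {t0..t1}"
    then have "(y has_vector_derivative y' t) (at t within {t0..t1})"
      using der has_real_derivative_iff_has_vector_derivative by blast
    then show "continuous (at t within {t0..t1}) y" by (rule has_vector_derivative_continuous)
  qed
  have cz: "continuous_on {t0..t1} z" unfolding z_def by (intro continuous_intros cy)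
  have "z t1 \<le> z t0"
  proof (rule DERIV_nonpos_imp_decreasing_open[OF t01 _ cz])
    fix t assume t: "t0 < t" "t < t1"
    have "(y has_real_derivative y' t) (at t within {t0..t1})" using der t by auto
    then have "(y has_real_derivative y' t) (at t)"
      using at_within_Icc_at[OF t] by simp
    then have "(z has_real_derivative (y' t * exp (- a * t) + y t * (exp (- a * t) * (- a)))) (at t)"
      unfolding z_def by (intro derivative_eq_intros) auto
    moreover have "y' t * exp (- a * t) + y t * (exp (- a * t) * (- a)) \<le> 0"
    proof -
      have "y' t - a * y t \<le> 0" using le t by auto
      then have "(y' t - a * y t) * exp (- a * t) \<le> 0" by (simp add: mult_nonpos_nonneg)
      then show ?thesis by (simp add: algebra_simps)
    qed
    ultimately show "\<exists>d. (z has_real_derivative d) (at t) \<and> d \<le> 0" by blast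
  qed
  then have "y t1 * exp (- a * t1) \<le> y t0 * exp (- a * t0)" by (simp add: z_def)
  then have "y t1 * exp (- a * t1) * exp (a * t1) \<le> y t0 * exp (- a * t0) * exp (a * t1)"
    by (intro mult_right_mono) auto
  then show ?thesis by (simp add: mult.assoc flip: exp_add) (simp add: algebra_simps)
qed

lemma decay_to_0:
  fixes y y' e :: "real \<Rightarrow> real"
  assumes a: "a > 0"
    and der: "\<forall>t\<ge>0. (y has_real_derivative y' t) (at t within {0..})"
    and le: "\<forall>t\<ge>0. y' t \<le> - a * y t + e t"
    and e: "(e \<longlongrightarrow> 0) at_top"
    and y0: "\<forall>t\<ge>0. y t \<ge> 0"
  shows "(y \<longlongrightarrow> 0) at_top"
proof (rule tendstoI)
  fix \<epsilon> :: real assume \<epsilon>: "\<epsilon> > 0"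
  have "\<forall>\<^sub>F t in at_top. dist (e t) 0 < a * \<epsilon> / 2"
    using tendstoD[OF e, of "a * \<epsilon> / 2"] a \<epsilon> by simp
  then obtain T0 where T0: "\<forall>t\<ge>T0. \<bar>e t\<bar> < a * \<epsilon> / 2"
    unfolding eventually_at_top_linorder by auto
  define t0 where "t0 = max T0 0"
  have bound: "y t \<le> \<epsilon>/2 + y t0 * exp (- a * (t - t0))" if t: "t \<ge> t0" for t
  proof -
    have "(\<lambda>s. y s - \<epsilon>/2) t \<le> (\<lambda>s. y s - \<epsilon>/2) t0 * exp ((- a) * (t - t0))"
    proof (rule gronwall_lin[OF t, where y'=y'])
      show "\<forall>s\<in>{t0..t}. ((\<lambda>s. y s - \<epsilon> / 2) has_real_derivative y' s) (at s within {t0..t})"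
      proof
        fix s assume s: "s \<in> {t0..t}"
        then have "(y has_real_derivative y' s) (at s within {0..})" using der t0_def by auto
        then have "(y has_real_derivative y' s) (at s within {t0..t})"
          by (rule DERIV_subset) (auto simp: t0_def)
        then show "((\<lambda>s. y s - \<epsilon> / 2) has_real_derivative y' s) (at s within {t0..t})"
          by (intro derivative_eq_intros) auto
      qed
      show "\<forall>s\<in>{t0..t}. y' s \<le> - a * (y s - \<epsilon> / 2)"
      proof
        fix s assume s: "s \<in> {t0..t}"
        then have "y' s \<le> - a * y s + e s" using le t0_def by auto
        moreover have "e s < a * \<epsilon> / 2" using T0 s t0_def by fastforce
        ultimately show "y' s \<le> - a * (y s - \<epsilon> / 2)" by (simp add: algebra_simps)
      qed
    qed
    moreover have "(y t0 - \<epsilon>/2) * exp ((- a) * (t - t0)) \<le> y t0 * exp (- a * (t - t0))"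
      using \<epsilon> by (intro mult_right_mono) auto
    ultimately show ?thesis by linarith
  qed
  have "\<forall>\<^sub>F t in at_top. t \<ge> t0 + 2 * y t0 / (a * \<epsilon>) + 1" by (rule eventually_ge_at_top)
  then show "\<forall>\<^sub>F t in at_top. dist (y t) 0 < \<epsilon>"
  proof (rule eventually_mono)
    fix t assume t: "t \<ge> t0 + 2 * y t0 / (a * \<epsilon>) + 1"
    have yt0: "y t0 \<ge> 0" using y0 t0_def by simp
    have "2 * y t0 / (a * \<epsilon>) \<ge> 0" using yt0 a \<epsilon> by simp
    have d: "t - t0 \<ge> 2 * y t0 / (a * \<epsilon>) + 1" using t by simp
    have "a * (t - t0) \<ge> a * (2 * y t0 / (a * \<epsilon>) + 1)" using d a by (intro mult_left_mono) auto
    also have "a * (2 * y t0 / (a * \<epsilon>) + 1) = 2 * y t0 / \<epsilon> + a" using a \<epsilon> by (simp add: field_simps)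
    finally have tt: "t \<ge> t0" "a * (t - t0) > 2 * y t0 / \<epsilon>" using d a \<open>2 * y t0 / (a * \<epsilon>) \<ge> 0\<close> by auto
    have ex: "exp (a * (t - t0)) \<ge> 1 + a * (t - t0)" by (rule exp_ge_add_one_self)
    have "y t0 * exp (- a * (t - t0)) = y t0 / exp (a * (t - t0))" by (simp add: exp_minus divide_inverse)
    also have "\<dots> \<le> y t0 / (1 + a * (t - t0))"
    proof (rule divide_left_mono[OF ex yt0])
      have "a * (t - t0) \<ge> 0" using tt a by simp
      then show "0 < exp (a * (t - t0)) * (1 + a * (t - t0))" by (intro mult_pos_pos) auto
    qed
    also have "\<dots> < \<epsilon> / 2"
    proof -
      define x where "x = a * (t - t0)"
      have x0: "x \<ge> 0" using tt a by (simp add: x_def)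
      have "2 * y t0 < \<epsilon> * x" using tt(2) \<epsilon> by (simp add: x_def pos_divide_less_eq mult.commute)
      then have "y t0 < \<epsilon> / 2 * (1 + x)" using \<epsilon> x0 by (simp add: algebra_simps)
      then show ?thesis using x0 by (simp add: x_def[symmetric] pos_divide_less_eq)
    qed
    finally have "y t < \<epsilon>" using bound[OF tt(1)] by simp
    then show "dist (y t) 0 < \<epsilon>" using y0 tt(1) t0_def by simp
  qed
qed



lemma hn_deriv: "((\<lambda>x::real. (min x 0)^2) has_real_derivative 2 * min x 0) (at x)"
proof (cases x "0::real" rule: linorder_cases)
  case less
  have "((\<lambda>x::real. x^2) has_real_derivative 2 * x) (at x)"
    by (auto intro!: derivative_eq_intros)
  then have "((\<lambda>x::real. x^2) has_real_derivative 2 * min x 0) (at x)" using less by simp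
  then show ?thesis
    by (rule has_field_derivative_transform_within_open[where S="{..<0}"]) (use less in auto)
next
  case greater
  have "((\<lambda>x::real. 0) has_real_derivative 2 * min x 0) (at x)" using greater by simp
  then show ?thesis
    by (rule has_field_derivative_transform_within_open[where S="{0<..}"]) (use greater in auto)
next
  case equal
  have "((\<lambda>h::real. ((min (0 + h) 0)^2 - (min 0 0)^2) / h) \<longlongrightarrow> 0) (at 0)"
  proof (rule tendsto_0_le[where K=1])
    show "((\<lambda>h::real. h) \<longlongrightarrow> 0) (at 0)" by (rule tendsto_ident_at)
    have pw: "norm (((min (0 + h) 0)^2 - (min 0 (0::real))^2) / h) \<le> norm h * 1" for h :: real
      by (cases "h < 0") (auto simp: power2_eq_square abs_mult)
    show "\<forall>\<^sub>F h in at (0::real). norm (((min (0 + h) 0)^2 - (min 0 0)^2) / h) \<le> norm h * 1"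
      by (rule always_eventually, rule allI, rule pw)
  qed
  then show ?thesis using equal by (simp add: DERIV_def)
qed

lemma tcd_deriv:
  assumes "twice_cont_diff h"
  shows "\<exists>D. (\<forall>x. (h has_derivative blinfun_apply (D x)) (at x)) \<and> continuous_on UNIV D"
proof -
  obtain D D2 where D: "\<forall>x. (h has_derivative blinfun_apply (D x)) (at x)"
    "\<forall>x. (D has_derivative blinfun_apply (D2 x)) (at x)"
    using assms unfolding twice_cont_diff_def by blast
  have "continuous_on UNIV D"
    using D(2) has_derivative_continuous continuous_at_imp_continuous_on by blast
  then show ?thesis using D(1) by blast
qed

lemma tcd_cont:
  assumes "twice_cont_diff h"
  shows "continuous_on UNIV h"
  using tcd_deriv[OF assms] has_derivative_continuous continuous_at_imp_continuous_on by blast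

lemma tcd_lip:
  fixes h :: "real^'n \<Rightarrow> real"
  assumes "twice_cont_diff h"
  shows "\<exists>L\<ge>0. \<forall>x\<in>cball 0 r. \<forall>y\<in>cball 0 r. \<bar>h x - h y\<bar> \<le> L * norm (x - y)"
proof -
  obtain D where D: "\<forall>x. (h has_derivative blinfun_apply (D x)) (at x)" "continuous_on UNIV D"
    using tcd_deriv[OF assms] by blast
  have "continuous_on (cball 0 r) (\<lambda>x. norm (D x))"
    using D(2) by (intro continuous_intros) (auto intro: continuous_on_subset)
  then have "compact ((\<lambda>x. norm (D x)) ` cball 0 r)"
    by (intro compact_continuous_image) auto
  then have "bounded ((\<lambda>x. norm (D x)) ` cball 0 r)" by (rule compact_imp_bounded)
  then obtain B where B: "B > 0" "\<forall>x\<in>cball 0 r. norm (norm (D x)) \<le> B"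
    unfolding bounded_pos by auto
  have "\<forall>x\<in>cball 0 r. \<forall>y\<in>cball 0 r. \<bar>h x - h y\<bar> \<le> B * norm (x - y)"
  proof (intro ballI)
    fix x y :: "real^'n" assume xy: "x \<in> cball 0 r" "y \<in> cball 0 r"
    have "norm (h x - h y) \<le> B * norm (x - y)"
    proof (rule differentiable_bound[where f'="\<lambda>x. blinfun_apply (D x)"])
      show "convex (cball (0::real^'n) r)" by simp
      show "\<And>x. x \<in> cball 0 r \<Longrightarrow> (h has_derivative blinfun_apply (D x)) (at x within cball 0 r)"
        using D(1) has_derivative_at_withinI by blast
      show "\<And>x. x \<in> cball 0 r \<Longrightarrow> onorm (blinfun_apply (D x)) \<le> B"
        using B(2) by (simp add: norm_blinfun.rep_eq[symmetric])
    qed (use xy in auto)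
    then show "\<bar>h x - h y\<bar> \<le> B * norm (x - y)" by simp
  qed
  then show ?thesis using B(1) by (intro exI[of _ B]) auto
qed



lemma prod_neg_bound:
  fixes a b s :: real
  assumes "a \<le> 0" "-a \<le> s" "b \<le> 0" "-b \<le> s"
  shows "a * b \<le> s^2" "0 \<le> a * b"
proof -
  have "a * b = (-a) * (-b)" by simp
  also have "\<dots> \<le> s * s" using assms by (intro mult_mono) auto
  finally show "a * b \<le> s^2" by (simp add: power2_eq_square)
  show "0 \<le> a * b" using assms by (simp add: mult_nonpos_nonpos)
qed

lemma cross_term:
  fixes a t F s B L :: real
  assumes B: "B \<ge> 0" "L \<ge> 0" "s \<ge> 0"
    and bd: "\<bar>t\<bar> \<le> B" "\<bar>F\<bar> \<le> B" "F \<ge> - L * s"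
    and a0: "a \<le> 0" and as: "-a \<le> s" and vt: "- min t 0 \<le> s"
  shows "a * (t * F) \<le> B * (L + 1) * s^2"
proof (cases "t \<ge> 0")
  case True
  have "t * F \<ge> t * (- L * s)" using True bd(3) by (intro mult_left_mono) auto
  moreover have "t * (L * s) \<le> B * (L * s)" using bd(1) True B by (intro mult_right_mono) auto
  ultimately have tF: "t * F \<ge> - (B * L * s)" by (simp add: algebra_simps)
  have "a * (t * F) \<le> a * (- (B * L * s))" using tF a0 by (rule mult_left_mono_neg)
  also have "\<dots> = (-a) * (B * L * s)" by simp
  also have "\<dots> \<le> s * (B * L * s)" using as B by (intro mult_right_mono) auto
  also have "\<dots> \<le> B * (L + 1) * s^2" using B by (simp add: power2_eq_square algebra_simps mult_nonneg_nonneg)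
  finally show ?thesis .
next
  case False
  then have tm: "t = min t 0" by simp
  have "a * t \<le> s^2" "0 \<le> a * t" using prod_neg_bound[OF a0 as, of t] vt tm by (metis min.cobounded2)+
  then have "a * t * F \<le> s^2 * B"
  proof -
    have "a * t * F \<le> a * t * \<bar>F\<bar>" using \<open>0 \<le> a * t\<close> by (intro mult_left_mono) auto
    also have "\<dots> \<le> s^2 * B" using \<open>a * t \<le> s^2\<close> \<open>0 \<le> a * t\<close> bd(2) by (intro mult_mono) auto
    finally show ?thesis .
  qed
  moreover have "B * (L + 1) * s^2 = s^2 * B + B * L * s^2" by (simp add: algebra_simps)
  moreover have "0 \<le> B * L * s^2" using B by simp
  moreover have "a * (t * F) = a * t * F" by simp
  ultimately show ?thesis by linarith
qed

lemma sq_term: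
  fixes r G s B :: real
  assumes "B \<ge> 0" "\<bar>G\<bar> \<le> B" "- min r 0 \<le> s"
  shows "- (min r 0 * (r * G)) \<le> B * s^2"
proof -
  define a where "a = min r 0"
  have ar: "a * r = a^2" by (simp add: a_def min_def power2_eq_square)
  have "0 \<le> -a" "-a \<le> s" using assms(3) by (auto simp: a_def)
  then have "(-a)^2 \<le> s^2" by (intro power_mono) auto
  then have a2: "a^2 \<le> s^2" by simp
  have "- (a * (r * G)) = - (a^2 * G)" using ar by (simp add: mult.assoc[symmetric])
  also have "\<dots> = a^2 * (-G)" by simp
  also have "\<dots> \<le> a^2 * B" using assms(2) by (intro mult_left_mono) auto
  also have "\<dots> \<le> s^2 * B" using a2 assms(1) by (intro mult_right_mono) auto
  finally show ?thesis by (simp add: mult.commute a_def)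
qed

lemma sq_neg:
  fixes r c :: real
  assumes "c \<ge> 0"
  shows "- (min r 0 * (c * r)) \<le> 0"
proof -
  define a where "a = min r 0"
  have ar: "a * r = a^2" by (simp add: a_def min_def power2_eq_square)
  have "a * (c * r) = c * (a * r)" by simp
  also have "\<dots> = c * a^2" using ar by simp
  finally have e: "a * (c * r) = c * a^2" .
  have "c * a^2 \<ge> 0" using assms by simp
  then show ?thesis using e unfolding a_def by linarith
qed

lemma negneg:
  fixes a x c s :: real
  assumes "a \<le> 0" "-a \<le> s" "- min x 0 \<le> s" "c \<ge> 0"
  shows "a * (c * x) \<le> c * s^2"
proof (cases "x \<ge> 0")
  case True
  then have "a * (c * x) \<le> 0" using assms by (simp add: mult_nonpos_nonneg)
  moreover have "c * s^2 \<ge> 0" using assms by simp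
  ultimately show ?thesis by linarith
next
  case False
  then have "a * x \<le> s^2" using prod_neg_bound(1)[OF assms(1,2), of x] assms(3) by simp
  then have "c * (a * x) \<le> c * s^2" using assms(4) by (intro mult_left_mono) auto
  then show ?thesis by (simp add: algebra_simps)
qed

lemma key_all:
  fixes r t F G th dl s B L :: real
  assumes B: "B \<ge> 0" "L \<ge> 0" "th > 0" "dl > 0" "s \<ge> 0"
    and bd: "\<bar>r\<bar> \<le> B" "\<bar>t\<bar> \<le> B" "\<bar>F\<bar> \<le> B" "\<bar>G\<bar> \<le> B" "F \<ge> - L * s" "G \<ge> - L * s"
    and vr: "- min r 0 \<le> s" and vt: "- min t 0 \<le> s" and ve: "- min (1 - r - t) 0 \<le> s"
  shows "2 * min r 0 * (t * F - r * G - th * r)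
       + 2 * min t 0 * (r * G - t * F + dl * (1 - r - t))
       + 2 * min (1 - r - t) 0 * (- ((t * F - r * G - th * r) + (r * G - t * F + dl * (1 - r - t))))
       \<le> (4 * B * (L + 1) + 4 * B + 2 * dl + 2 * th) * s^2"
proof -
  define E where "E = 1 - r - t"
  have a0: "min r 0 \<le> 0" "- min r 0 \<le> s" using vr by auto
  have b0: "min t 0 \<le> 0" "- min t 0 \<le> s" using vt by auto
  have e0: "min E 0 \<le> 0" "- min E 0 \<le> s" using ve by (auto simp: E_def)
  have 1: "min r 0 * (t * F) \<le> B * (L + 1) * s^2" by (rule cross_term[OF B(1,2,5) bd(2,3,5) a0 vt])
  have 2: "- (min r 0 * (r * G)) \<le> B * s^2" by (rule sq_term[OF B(1) bd(4) vr])
  have 3: "- (min r 0 * (th * r)) \<le> 0" by (rule sq_neg) (use B in simp)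
  have 4: "min t 0 * (r * G) \<le> B * (L + 1) * s^2" by (rule cross_term[OF B(1,2,5) bd(1,4,6) b0 vr])
  have 5: "- (min t 0 * (t * F)) \<le> B * s^2" by (rule sq_term[OF B(1) bd(3) vt])
  have 6: "min t 0 * (dl * E) \<le> dl * s^2" by (rule negneg[OF b0 e0(2)]) (use B in simp)
  have 7: "min E 0 * (th * r) \<le> th * s^2" by (rule negneg[OF e0 vr]) (use B in simp)
  have 8: "- (min E 0 * (dl * E)) \<le> 0" by (rule sq_neg) (use B in simp)
  have "- ((t * F - r * G - th * r) + (r * G - t * F + dl * E)) = th * r - dl * E" by simp
  then have "2 * min r 0 * (t * F - r * G - th * r)
       + 2 * min t 0 * (r * G - t * F + dl * E)
       + 2 * min E 0 * (- ((t * F - r * G - th * r) + (r * G - t * F + dl * E)))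
     = 2 * (min r 0 * (t * F)) + 2 * (- (min r 0 * (r * G))) + 2 * (- (min r 0 * (th * r)))
       + 2 * (min t 0 * (r * G)) + 2 * (- (min t 0 * (t * F))) + 2 * (min t 0 * (dl * E))
       + 2 * (min E 0 * (th * r)) + 2 * (- (min E 0 * (dl * E)))"
    by (simp add: algebra_simps)
  also have "\<dots> \<le> (4 * B * (L + 1) + 4 * B + 2 * dl + 2 * th) * s^2"
    using 1 2 3 4 5 6 7 8 by (simp add: algebra_simps)
  finally show ?thesis by (simp add: E_def)
qed



lemma vd_comp:
  assumes "(f has_vector_derivative D) F"
  shows "((\<lambda>x. f x $ i) has_real_derivative D $ i) F"
proof -
  have "(f has_derivative (\<lambda>x. x *\<^sub>R D)) F" using assms by (simp add: has_vector_derivative_def)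
  from bounded_linear.has_derivative[OF bounded_linear_vec_nth[of i] this]
  have "((\<lambda>x. f x $ i) has_derivative (\<lambda>x. x *\<^sub>R D $ i)) F" by simp
  moreover have "(\<lambda>x. x * D $ i) = (*) (D $ i)" by (auto simp: mult.commute)
  ultimately show ?thesis
    by (simp add: has_field_derivative_def)
qed

lemma norm_vec_sq: "norm (x::real^'n) = sqrt (\<Sum>j\<in>UNIV. (x$j)^2)"
  unfolding norm_vec_def L2_set_def by simp

lemma lip_bounds:
  fixes h :: "real^'n \<Rightarrow> real"
  assumes mono: "\<forall>x y. (\<forall>k. x$k \<le> y$k) \<longrightarrow> h x \<le> h y" and h0: "h 0 = 0"
    and lip: "\<forall>x\<in>cball 0 r. \<forall>y\<in>cball 0 r. \<bar>h x - h y\<bar> \<le> L * norm (x - y)" and L: "L \<ge> 0"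
    and x: "norm x \<le> r" and sq: "sqrt (\<Sum>j\<in>UNIV. (min (x$j) 0)^2) \<le> s"
  shows "h x \<ge> - L * s" "\<bar>h x\<bar> \<le> L * r"
proof -
  have r0: "r \<ge> 0" using x norm_ge_zero order_trans by blast
  have xc: "x \<in> cball 0 r" using x by simp
  have 0: "(0::real^'n) \<in> cball 0 r" using r0 by simp
  have "\<bar>h x - h 0\<bar> \<le> L * norm (x - 0)" using lip xc 0 by blast
  then show "\<bar>h x\<bar> \<le> L * r" using h0 x L by (smt (verit) mult_left_mono diff_zero)
  define xp where "xp = (\<chi> j. max (x$j) 0)"
  have "norm xp \<le> norm x" unfolding xp_def by (rule norm_le_componentwise_cart) auto
  then have xpc: "xp \<in> cball 0 r" using x by simp
  have "h 0 \<le> h xp" using mono by (simp add: xp_def)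
  then have hxp: "h xp \<ge> 0" using h0 by simp
  have "x - xp = (\<chi> j. min (x$j) 0)" by (auto simp: xp_def vec_eq_iff min_def max_def)
  then have "norm (x - xp) \<le> s" using sq by (simp add: norm_vec_sq)
  then have "L * norm (x - xp) \<le> L * s" using L by (intro mult_left_mono)
  moreover have "\<bar>h x - h xp\<bar> \<le> L * norm (x - xp)" using lip xc xpc by blast
  ultimately show "h x \<ge> - L * s" using hxp by linarith
qed



lemma invariance:
  fixes f g :: "'n::finite \<Rightarrow> real^'n \<Rightarrow> real"
    and \<theta> \<delta> :: "real^'n"
    and R T :: "real \<Rightarrow> real^'n"
  assumes theta_pos: "\<forall>i. \<theta> $ i > 0"
    and delta_pos: "\<forall>i. \<delta> $ i > 0"
    and fmono: "\<forall>i x y. (\<forall>k. x$k \<le> y$k) \<longrightarrow> f i x \<le> f i y"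
    and gmono: "\<forall>i x y. (\<forall>k. x$k \<le> y$k) \<longrightarrow> g i x \<le> g i y"
    and f0: "\<forall>i. f i 0 = 0" and g0: "\<forall>i. g i 0 = 0"
    and ftcd: "\<forall>i. twice_cont_diff (f i)" and gtcd: "\<forall>i. twice_cont_diff (g i)"
    and odeR: "\<forall>t\<ge>0. (R has_vector_derivative
                 (\<chi> i. T t $ i * f i (R t) - R t $ i * g i (T t) - \<theta> $ i * R t $ i))
                 (at t within {0..})"
    and odeT: "\<forall>t\<ge>0. (T has_vector_derivative
                 (\<chi> i. R t $ i * g i (T t) - T t $ i * f i (R t)
                        + \<delta> $ i * (1 - R t $ i - T t $ i)))
                 (at t within {0..})"
    and init: "\<forall>i. R 0 $ i \<ge> 0 \<and> T 0 $ i \<ge> 0 \<and> R 0 $ i + T 0 $ i \<le> 1"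
    and t1: "t1 \<ge> 0"
  shows "\<forall>i. R t1 $ i \<ge> 0 \<and> T t1 $ i \<ge> 0 \<and> R t1 $ i + T t1 $ i \<le> 1"
proof -
  define dR where "dR i t = T t $ i * f i (R t) - R t $ i * g i (T t) - \<theta> $ i * R t $ i" for i t
  define dT where "dT i t = R t $ i * g i (T t) - T t $ i * f i (R t)
                        + \<delta> $ i * (1 - R t $ i - T t $ i)" for i t
  have dRw: "((\<lambda>t. R t $ i) has_real_derivative dR i t) (at t within {0..t1})" if "t \<in> {0..t1}" for i t
  proof -
    have "((\<lambda>t. R t $ i) has_real_derivative dR i t) (at t within {0..})"
      using vd_comp[OF odeR[rule_format, of t], of i] that by (simp add: dR_def)
    then show ?thesis by (rule DERIV_subset) auto
  qed
  have dTw: "((\<lambda>t. T t $ i) has_real_derivative dT i t) (at t within {0..t1})" if "t \<in> {0..t1}" for i t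
  proof -
    have "((\<lambda>t. T t $ i) has_real_derivative dT i t) (at t within {0..})"
      using vd_comp[OF odeT[rule_format, of t], of i] that by (simp add: dT_def)
    then show ?thesis by (rule DERIV_subset) auto
  qed
  have cR: "continuous_on {0..t1} R"
    unfolding continuous_on_eq_continuous_within
  proof
    fix t assume t: "t \<in> {0..t1}"
    have "continuous (at t within {0..}) R"
      using has_vector_derivative_continuous[OF odeR[rule_format, of t]] t by auto
    then show "continuous (at t within {0..t1}) R" by (rule continuous_within_subset) auto
  qed
  have cT: "continuous_on {0..t1} T"
    unfolding continuous_on_eq_continuous_within
  proof
    fix t assume t: "t \<in> {0..t1}"
    have "continuous (at t within {0..}) T"
      using has_vector_derivative_continuous[OF odeT[rule_format, of t]] t by auto
    then show "continuous (at t within {0..t1}) T" by (rule continuous_within_subset) auto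
  qed
  obtain r1 where r1: "\<forall>t\<in>{0..t1}. norm (R t) \<le> r1"
    using compact_imp_bounded[OF compact_continuous_image[OF cR compact_Icc]]
    unfolding bounded_iff by auto
  obtain r2 where r2: "\<forall>t\<in>{0..t1}. norm (T t) \<le> r2"
    using compact_imp_bounded[OF compact_continuous_image[OF cT compact_Icc]]
    unfolding bounded_iff by auto
  define r where "r = max r1 r2"
  have rR: "norm (R t) \<le> r" "norm (T t) \<le> r" if "t \<in> {0..t1}" for t
    using r1 r2 that by (auto simp: r_def intro: le_max_iff_disj[THEN iffD2])
  have "\<forall>i. \<exists>L. 0 \<le> L \<and> (\<forall>x\<in>cball 0 r. \<forall>y\<in>cball 0 r. \<bar>f i x - f i y\<bar> \<le> L * norm (x - y))"
    using tcd_lip ftcd by blast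
  from choice[OF this] obtain Lf where Lf: "\<forall>i. 0 \<le> Lf i \<and> (\<forall>x\<in>cball 0 r. \<forall>y\<in>cball 0 r. \<bar>f i x - f i y\<bar> \<le> Lf i * norm (x - y))"
    by blast
  have "\<forall>i. \<exists>L. 0 \<le> L \<and> (\<forall>x\<in>cball 0 r. \<forall>y\<in>cball 0 r. \<bar>g i x - g i y\<bar> \<le> L * norm (x - y))"
    using tcd_lip gtcd by blast
  from choice[OF this] obtain Lg where Lg: "\<forall>i. 0 \<le> Lg i \<and> (\<forall>x\<in>cball 0 r. \<forall>y\<in>cball 0 r. \<bar>g i x - g i y\<bar> \<le> Lg i * norm (x - y))"
    by blast
  define L where "L = (\<Sum>i\<in>UNIV. Lf i + Lg i)"
  have LfL: "Lf i \<le> L" "Lg i \<le> L" for i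
  proof -
    have "Lf i + Lg i \<le> L" unfolding L_def using Lf Lg by (intro member_le_sum) (auto intro: add_nonneg_nonneg)
    moreover have "0 \<le> Lf i" "0 \<le> Lg i" using Lf Lg by auto
    ultimately show "Lf i \<le> L" "Lg i \<le> L" by linarith+
  qed
  have L0: "L \<ge> 0" using LfL(1)[of undefined] Lf by (meson order_trans)
  have "0 \<in> {0..t1}" using t1 by simp
  then have "norm (R 0) \<le> r" by (rule rR)
  then have r0: "r \<ge> 0" using norm_ge_zero[of "R 0"] by linarith
  define B where "B = r + L * r"
  have B0: "B \<ge> 0" and Br: "r \<le> B" and BL: "L * r \<le> B" using r0 L0 by (auto simp: B_def)
  define nR where "nR i t = min (R t $ i) 0" for i t
  define nT where "nT i t = min (T t $ i) 0" for i t
  define nE where "nE i t = min (1 - R t $ i - T t $ i) 0" for i t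
  define W where "W t = (\<Sum>i\<in>UNIV. (nR i t)^2 + (nT i t)^2 + (nE i t)^2)" for t
  define W' where "W' t = (\<Sum>i\<in>UNIV. 2 * nR i t * dR i t + 2 * nT i t * dT i t
                           + 2 * nE i t * (- (dR i t + dT i t)))" for t
  define K where "K = (\<Sum>i\<in>UNIV. 4 * B * (L + 1) + 4 * B + 2 * \<delta>$i + 2 * \<theta>$i)"
  have W0: "W t \<ge> 0" for t unfolding W_def by (intro sum_nonneg) auto
  have derW: "\<forall>t\<in>{0..t1}. (W has_real_derivative W' t) (at t within {0..t1})"
  proof
    fix t assume t: "t \<in> {0..t1}"
    have h1: "((\<lambda>t. (nR i t)^2) has_real_derivative 2 * nR i t * dR i t) (at t within {0..t1})" for i
      using DERIV_chain2[OF hn_deriv[of "R t $ i"] dRw[OF t]] by (simp add: nR_def)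
    have h2: "((\<lambda>t. (nT i t)^2) has_real_derivative 2 * nT i t * dT i t) (at t within {0..t1})" for i
      using DERIV_chain2[OF hn_deriv[of "T t $ i"] dTw[OF t]] by (simp add: nT_def)
    have hE: "((\<lambda>t. 1 - R t $ i - T t $ i) has_real_derivative - (dR i t + dT i t)) (at t within {0..t1})" for i
      using DERIV_diff[OF DERIV_diff[OF DERIV_const dRw[OF t]] dTw[OF t]] by simp
    have h3: "((\<lambda>t. (nE i t)^2) has_real_derivative 2 * nE i t * (- (dR i t + dT i t))) (at t within {0..t1})" for i
      using DERIV_chain2[OF hn_deriv[of "1 - R t $ i - T t $ i"] hE] by (simp add: nE_def)
    show "(W has_real_derivative W' t) (at t within {0..t1})"
      unfolding W_def W'_def
      by (intro DERIV_sum DERIV_add h1 h2 h3)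
  qed
  have bnd: "\<forall>t\<in>{0..t1}. W' t \<le> K * W t"
  proof
    fix t assume t: "t \<in> {0..t1}"
    define s where "s = sqrt (W t)"
    have s0: "s \<ge> 0" and s2: "s^2 = W t" using W0[of t] by (auto simp: s_def)
    have termle: "(nR i t)^2 \<le> W t" "(nT i t)^2 \<le> W t" "(nE i t)^2 \<le> W t" for i
    proof -
      have "(nR i t)^2 + (nT i t)^2 + (nE i t)^2 \<le> W t"
        unfolding W_def by (rule member_le_sum) auto
      moreover have "(nR i t)^2 \<ge> 0" "(nT i t)^2 \<ge> 0" "(nE i t)^2 \<ge> 0" by simp_all
      ultimately show "(nR i t)^2 \<le> W t" "(nT i t)^2 \<le> W t" "(nE i t)^2 \<le> W t"
        by linarith+
    qed
    have vle: "- min x 0 \<le> s" if "(min x 0)^2 \<le> W t" for x :: real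
    proof -
      have "sqrt ((min x 0)^2) \<le> s" unfolding s_def using that by (rule real_sqrt_le_mono)
      then show ?thesis by simp
    qed
    have sqR: "sqrt (\<Sum>j\<in>UNIV. (min (R t $ j) 0)^2) \<le> s"
      unfolding s_def W_def nR_def[symmetric]
      by (intro real_sqrt_le_mono sum_mono) auto
    have sqT: "sqrt (\<Sum>j\<in>UNIV. (min (T t $ j) 0)^2) \<le> s"
      unfolding s_def W_def nT_def[symmetric]
      by (intro real_sqrt_le_mono sum_mono) auto
    have RtB: "\<bar>R t $ i\<bar> \<le> B" "\<bar>T t $ i\<bar> \<le> B" for i
      using component_le_norm_cart[of "R t" i] component_le_norm_cart[of "T t" i] rR[OF t] Br by linarith+
    have each: "2 * nR i t * dR i t + 2 * nT i t * dT i t + 2 * nE i t * (- (dR i t + dT i t))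
        \<le> (4 * B * (L + 1) + 4 * B + 2 * \<delta>$i + 2 * \<theta>$i) * s^2" for i
    proof -
      have lbf: "f i (R t) \<ge> - Lf i * s" "\<bar>f i (R t)\<bar> \<le> Lf i * r"
        using lip_bounds[of "f i" r "Lf i" "R t" s] fmono f0 Lf rR[OF t] sqR by auto
      have lbg: "g i (T t) \<ge> - Lg i * s" "\<bar>g i (T t)\<bar> \<le> Lg i * r"
        using lip_bounds[of "g i" r "Lg i" "T t" s] gmono g0 Lg rR[OF t] sqT by auto
      have "Lf i * s \<le> L * s" "Lg i * s \<le> L * s" using LfL s0 by (auto intro: mult_right_mono)
      moreover have "Lf i * r \<le> L * r" "Lg i * r \<le> L * r" using LfL r0 by (auto intro: mult_right_mono)
      ultimately have F1: "f i (R t) \<ge> - L * s" "\<bar>f i (R t)\<bar> \<le> B"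
        and G1: "g i (T t) \<ge> - L * s" "\<bar>g i (T t)\<bar> \<le> B" using lbf lbg BL by linarith+
      show ?thesis
        unfolding nR_def nT_def nE_def dR_def dT_def
        by (rule key_all[OF B0 L0 theta_pos[rule_format] delta_pos[rule_format] s0 RtB(1) RtB(2) F1(2) G1(2) F1(1) G1(1)])
          (use vle termle in \<open>auto simp: nR_def nT_def nE_def\<close>)
    qed
    have "W' t \<le> (\<Sum>i\<in>UNIV. (4 * B * (L + 1) + 4 * B + 2 * \<delta>$i + 2 * \<theta>$i) * s^2)"
      unfolding W'_def by (rule sum_mono) (rule each)
    also have "\<dots> = K * W t" unfolding K_def s2[symmetric] by (simp add: sum_distrib_right)
    finally show "W' t \<le> K * W t" .
  qed
  have "W t1 \<le> W 0 * exp (K * (t1 - 0))"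
    by (rule gronwall_lin[OF t1 derW bnd])
  moreover have "W 0 = 0"
  proof -
    have "\<forall>i. nR i 0 = 0 \<and> nT i 0 = 0 \<and> nE i 0 = 0"
    proof
      fix i
      have h: "R 0$i \<ge> 0" "T 0$i \<ge> 0" "1 - R 0$i - T 0$i \<ge> 0" using init[rule_format, of i] by linarith+
      then show "nR i 0 = 0 \<and> nT i 0 = 0 \<and> nE i 0 = 0" by (simp add: nR_def nT_def nE_def min_absorb2)
    qed
    then show ?thesis by (simp add: W_def)
  qed
  ultimately have "W t1 = 0" using W0[of t1] by simp
  then have z: "\<forall>i. (nR i t1)^2 + (nT i t1)^2 + (nE i t1)^2 = 0"
    unfolding W_def by (subst (asm) sum_nonneg_eq_0_iff) auto
  show ?thesis
  proof
    fix i
    have zz: "(nR i t1)^2 + (nT i t1)^2 + (nE i t1)^2 = 0" using z by blast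
    have "(nR i t1)^2 \<ge> 0" "(nT i t1)^2 \<ge> 0" "(nE i t1)^2 \<ge> 0" by simp_all
    then have "(nR i t1)^2 = 0" "(nT i t1)^2 = 0" "(nE i t1)^2 = 0" using zz by linarith+
    then have "nR i t1 = 0" "nT i t1 = 0" "nE i t1 = 0" by simp_all
    then show "R t1 $ i \<ge> 0 \<and> T t1 $ i \<ge> 0 \<and> R t1 $ i + T t1 $ i \<le> 1"
      by (auto simp: nR_def nT_def nE_def min_def split: if_splits)
  qed
qed



theorem theorem3:
  fixes ER ET :: "('n::finite \<times> 'n) set"
    and f g :: "'n \<Rightarrow> real^'n \<Rightarrow> real"
    and \<theta> \<delta> :: "real^'n"
    and J :: "real^'n^'n"
    and R T :: "real \<Rightarrow> real^'n"
  assumes SC_R: "strongly_connected ER"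
    and SC_T: "strongly_connected ET"
    and theta_pos: "\<forall>i. \<theta> $ i > 0"
    and delta_pos: "\<forall>i. \<delta> $ i > 0"
    and C1f: "\<forall>i j. depends_on (f i) j \<longleftrightarrow> (i, j) \<in> ER"
    and C1g: "\<forall>i j. depends_on (g i) j \<longleftrightarrow> (i, j) \<in> ET"
    and C2f: "\<forall>i. f i 0 = 0"
    and C2g: "\<forall>i. g i 0 = 0"
    and C3f: "\<forall>i. twice_cont_diff (f i)"
    and C3g: "\<forall>i. twice_cont_diff (g i)"
    and C4f: "\<forall>i j. (i, j) \<in> ER \<longrightarrow> strictly_incr_in (f i) j"
    and C4g: "\<forall>i j. (i, j) \<in> ET \<longrightarrow> strictly_incr_in (g i) j"
    and C5f: "\<forall>i. concave_on UNIV (f i)"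
    and C5g: "\<forall>i. concave_on UNIV (g i)"
    and jac: "((\<lambda>x. \<chi> i. f i x) has_derivative (\<lambda>h. J *v h)) (at 0)"
    and stab: "spectral_abscissa (J - diag_mat \<theta>) < 0"
    and odeR: "\<forall>t\<ge>0. (R has_vector_derivative
                 (\<chi> i. T t $ i * f i (R t) - R t $ i * g i (T t) - \<theta> $ i * R t $ i))
                 (at t within {0..})"
    and odeT: "\<forall>t\<ge>0. (T has_vector_derivative
                 (\<chi> i. R t $ i * g i (T t) - T t $ i * f i (R t)
                        + \<delta> $ i * (1 - R t $ i - T t $ i)))
                 (at t within {0..})"
    and init: "\<forall>i. R 0 $ i \<ge> 0 \<and> T 0 $ i \<ge> 0 \<and> R 0 $ i + T 0 $ i \<le> 1"
  shows "(R \<longlongrightarrow> 0) at_top \<and> (T \<longlongrightarrow> (\<chi> i. 1)) at_top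
         \<and> ((\<lambda>t. (\<Sum>i\<in>UNIV. R t $ i) / real CARD('n)) \<longlongrightarrow> 0) at_top
         \<and> ((\<lambda>t. (\<Sum>i\<in>UNIV. T t $ i) / real CARD('n)) \<longlongrightarrow> 1) at_top"
proof -
  have Hf: "\<forall>j. depends_on (f i) j \<longrightarrow> strictly_incr_in (f i) j" for i using C1f C4f by blast
  have Hg: "\<forall>j. depends_on (g i) j \<longrightarrow> strictly_incr_in (g i) j" for i using C1g C4g by blast
  have fmono: "\<forall>i x y. (\<forall>k. x$k \<le> y$k) \<longrightarrow> f i x \<le> f i y" using mono_h[OF Hf] by blast
  have gmono: "\<forall>i x y. (\<forall>k. x$k \<le> y$k) \<longrightarrow> g i x \<le> g i y" using mono_h[OF Hg] by blast
  have inv: "\<forall>i. R t $ i \<ge> 0 \<and> T t $ i \<ge> 0 \<and> R t $ i + T t $ i \<le> 1" if "t \<ge> 0" for t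
    by (rule invariance[OF theta_pos delta_pos fmono gmono C2f C2g C3f C3g odeR odeT init that])
  have Jcomp: "((\<lambda>x. f i x) has_derivative (\<lambda>h. (J *v h)$i)) (at 0)" for i
    using bounded_linear.has_derivative[OF bounded_linear_vec_nth[of i] jac] by simp
  have Jax: "(J *v axis j 1)$i = J$i$j" for i j
  proof -
    have "(\<Sum>k\<in>UNIV. J$i$k * (if k = j then 1 else 0)) = J$i$j"
      by (simp add: if_distrib[where f="\<lambda>a. _ * a"] cong: if_cong)
    then show ?thesis by (simp add: matrix_vector_mult_def axis_def)
  qed
  have Jnn: "J$i$j \<ge> 0" for i j
  proof -
    have "\<forall>s>0. f i 0 \<le> f i (s *\<^sub>R axis j 1)"
      using fmono by (auto simp: axis_def)
    from deriv_nonneg_of_mono[OF Jcomp this] show ?thesis by (simp add: Jax)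
  qed
  have fle: "f i x \<le> (J *v x)$i" for i x
    by (rule concave_le_deriv[OF C5f[rule_format] C2f[rule_format] Jcomp])
  define Q where "Q = J - diag_mat \<theta>"
  have Qoff: "\<forall>i j. i \<noteq> j \<longrightarrow> Q$i$j \<ge> 0" using Jnn by (simp add: Q_def diag_mat_def)
  have QR: "(Q *v x)$i = (J *v x)$i - \<theta>$i * x$i" for x i
  proof -
    have "(\<Sum>j\<in>UNIV. (if i = j then \<theta>$i else 0) * x$j) = \<theta>$i * x$i"
      by (simp add: if_distrib[where f="\<lambda>a. a * _"] cong: if_cong)
    then show ?thesis
      by (simp add: Q_def diag_mat_def matrix_vector_mult_def sum_subtractf algebra_simps)
  qed
  obtain w where wpos: "\<forall>i. w$i > 0" and wQ: "\<forall>j. (\<Sum>i\<in>UNIV. w$i * Q$i$j) = -1"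
    using wexist[OF Qoff] stab unfolding Q_def by blast
  define dR where "dR i t = T t $ i * f i (R t) - R t $ i * g i (T t) - \<theta> $ i * R t $ i" for i t
  define dT where "dT i t = R t $ i * g i (T t) - T t $ i * f i (R t)
                        + \<delta> $ i * (1 - R t $ i - T t $ i)" for i t
  have dRd: "((\<lambda>t. R t $ i) has_real_derivative dR i t) (at t within {0..})" if "t \<ge> 0" for i t
    using vd_comp[OF odeR[rule_format, OF that], of i] by (simp add: dR_def)
  have dTd: "((\<lambda>t. T t $ i) has_real_derivative dT i t) (at t within {0..})" if "t \<ge> 0" for i t
    using vd_comp[OF odeT[rule_format, OF that], of i] by (simp add: dT_def)
  have Fnn: "f i (R t) \<ge> 0" if "t \<ge> 0" for i t
  proof -
    have "f i 0 \<le> f i (R t)" using fmono[rule_format, of 0 "R t" i] inv[OF that] by simp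
    then show ?thesis using C2f by simp
  qed
  have Gnn: "g i (T t) \<ge> 0" if "t \<ge> 0" for i t
  proof -
    have "g i 0 \<le> g i (T t)" using gmono[rule_format, of 0 "T t" i] inv[OF that] by simp
    then show ?thesis using C2g by simp
  qed
  define V where "V t = (\<Sum>i\<in>UNIV. w$i * R t $ i)" for t
  define V' where "V' t = (\<Sum>i\<in>UNIV. w$i * dR i t)" for t
  define Wt where "Wt = (\<Sum>i\<in>UNIV. w$i)"
  have Wt: "Wt > 0" "w$i \<le> Wt" for i
  proof -
    show "w$i \<le> Wt" unfolding Wt_def using wpos by (intro member_le_sum) (auto intro: less_imp_le)
    then show "Wt > 0" using wpos[rule_format, of i] by linarith
  qed
  have V0: "V t \<ge> 0" if "t \<ge> 0" for t
    unfolding V_def using wpos inv[OF that] by (intro sum_nonneg) (auto intro: mult_nonneg_nonneg less_imp_le)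
  have Vd: "\<forall>t\<ge>0. (V has_real_derivative V' t) (at t within {0..})"
  proof (intro allI impI)
    fix t :: real assume t: "t \<ge> 0"
    show "(V has_real_derivative V' t) (at t within {0..})"
      unfolding V_def V'_def by (intro DERIV_sum DERIV_cmult dRd[OF t])
  qed
  have Vle: "\<forall>t\<ge>0. V' t \<le> - (1/Wt) * V t + 0"
  proof (intro allI impI)
    fix t :: real assume t: "t \<ge> 0"
    have each: "w$i * dR i t \<le> w$i * (Q *v R t)$i" for i
    proof -
      have Ri: "R t$i \<ge> 0" "T t$i \<le> 1" "T t$i \<ge> 0" using inv[OF t] by (auto dest: spec[of _ i])
      have "T t $ i * f i (R t) \<le> f i (R t)" using Ri Fnn[OF t] by (simp add: mult_left_le_one_le)
      also have "\<dots> \<le> (J *v R t)$i" by (rule fle)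
      finally have "T t $ i * f i (R t) \<le> (J *v R t)$i" .
      moreover have "R t $ i * g i (T t) \<ge> 0" using Ri Gnn[OF t] by simp
      ultimately have "dR i t \<le> (Q *v R t)$i" by (simp add: dR_def QR)
      then show ?thesis using wpos by (simp add: mult_left_mono less_imp_le)
    qed
    have "V' t \<le> (\<Sum>i\<in>UNIV. w$i * (Q *v R t)$i)" unfolding V'_def by (rule sum_mono) (rule each)
    also have "\<dots> = (\<Sum>i\<in>UNIV. \<Sum>j\<in>UNIV. w$i * Q$i$j * R t $ j)"
      by (simp add: matrix_vector_mult_def sum_distrib_left mult.assoc)
    also have "\<dots> = (\<Sum>j\<in>UNIV. \<Sum>i\<in>UNIV. w$i * Q$i$j * R t $ j)"
      by (rule sum.swap)
    also have "\<dots> = (\<Sum>j\<in>UNIV. (\<Sum>i\<in>UNIV. w$i * Q$i$j) * R t $ j)"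
      by (simp add: sum_distrib_right)
    also have "\<dots> = - (\<Sum>j\<in>UNIV. R t $ j)" using wQ by (simp add: sum_negf)
    also have "\<dots> \<le> - (1/Wt) * V t"
    proof -
      have "V t \<le> (\<Sum>j\<in>UNIV. Wt * R t $ j)"
        unfolding V_def using Wt inv[OF t] by (intro sum_mono mult_right_mono) auto
      also have "\<dots> = Wt * (\<Sum>j\<in>UNIV. R t $ j)" by (simp add: sum_distrib_left)
      finally have "V t / Wt \<le> (\<Sum>j\<in>UNIV. R t $ j)" using Wt(1) by (simp add: divide_le_eq mult.commute)
      then show ?thesis by simp
    qed
    finally show "V' t \<le> - (1/Wt) * V t + 0" by simp
  qed
  have Vlim: "(V \<longlongrightarrow> 0) at_top"
    by (rule decay_to_0[OF _ Vd Vle tendsto_const]) (use Wt V0 in auto)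
  have Rlim: "((\<lambda>t. R t $ i) \<longlongrightarrow> 0) at_top" for i
  proof (rule tendsto_sandwich[where f="\<lambda>t. 0" and h="\<lambda>t. V t / w$i"])
    have "\<forall>\<^sub>F t in at_top. t \<ge> (0::real)" by (rule eventually_ge_at_top)
    then show "\<forall>\<^sub>F t in at_top. 0 \<le> R t $ i" by eventually_elim (use inv in blast)
    show "\<forall>\<^sub>F t in at_top. R t $ i \<le> V t / w$i"
      using \<open>\<forall>\<^sub>F t in at_top. t \<ge> (0::real)\<close>
    proof eventually_elim
      case (elim t)
      have "w$i * R t $ i \<le> V t"
        unfolding V_def using wpos inv[OF elim] by (intro member_le_sum) (auto intro: mult_nonneg_nonneg less_imp_le)
      then show ?case using wpos by (simp add: le_divide_eq mult.commute)
    qed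
    show "((\<lambda>t. 0) \<longlongrightarrow> (0::real)) at_top" by simp
    have "w$i \<noteq> 0" using wpos[rule_format, of i] by simp
    then show "((\<lambda>t. V t / w$i) \<longlongrightarrow> 0) at_top" using tendsto_divide[OF Vlim tendsto_const, of "w$i"] by simp
  qed
  have RL: "(R \<longlongrightarrow> 0) at_top" using vec_tendstoI[of R 0] Rlim by simp
  have Tlim: "((\<lambda>t. T t $ i) \<longlongrightarrow> 1) at_top" for i
  proof -
    define S where "S t = 1 - T t $ i" for t
    define e where "e t = \<delta>$i * R t $ i + (J *v R t)$i" for t
    have Sd: "\<forall>t\<ge>0. (S has_real_derivative - dT i t) (at t within {0..})"
      unfolding S_def using dTd DERIV_diff[OF DERIV_const dTd] by auto
    have Sle: "\<forall>t\<ge>0. - dT i t \<le> - \<delta>$i * S t + e t"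
    proof (intro allI impI)
      fix t :: real assume t: "t \<ge> 0"
      have Ri: "R t$i \<ge> 0" "T t$i \<le> 1" "T t$i \<ge> 0" using inv[OF t] by (auto dest: spec[of _ i])
      have "T t $ i * f i (R t) \<le> f i (R t)" using Ri Fnn[OF t] by (simp add: mult_left_le_one_le)
      also have "\<dots> \<le> (J *v R t)$i" by (rule fle)
      finally have "T t $ i * f i (R t) \<le> (J *v R t)$i" .
      moreover have "R t $ i * g i (T t) \<ge> 0" using Ri Gnn[OF t] by simp
      ultimately show "- dT i t \<le> - \<delta>$i * S t + e t" by (simp add: dT_def S_def e_def algebra_simps)
    qed
    have elim: "(e \<longlongrightarrow> 0) at_top"
    proof -
      have "((\<lambda>t. (\<Sum>j\<in>UNIV. J$i$j * R t $ j)) \<longlongrightarrow> (\<Sum>j\<in>UNIV. J$i$j * 0)) at_top"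
        using Rlim by (intro tendsto_intros)
      then have "((\<lambda>t. (J *v R t)$i) \<longlongrightarrow> 0) at_top" by (simp add: matrix_vector_mult_def)
      then show ?thesis unfolding e_def using tendsto_add[OF tendsto_mult[OF tendsto_const Rlim]] by fastforce
    qed
    have "(S \<longlongrightarrow> 0) at_top"
    proof (rule decay_to_0[OF _ Sd Sle elim])
      show "\<delta>$i > 0" using delta_pos by blast
      show "\<forall>t\<ge>0. 0 \<le> S t"
      proof (intro allI impI)
        fix t :: real assume t: "t \<ge> 0"
        then have "R t $ i \<ge> 0" "R t $ i + T t $ i \<le> 1" using inv[OF t] by blast+
        then show "0 \<le> S t" by (simp add: S_def)
      qed
    qed
    then have "((\<lambda>t. 1 - S t) \<longlongrightarrow> 1 - 0) at_top" by (intro tendsto_intros)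
    then show ?thesis by (simp add: S_def)
  qed
  have TL: "(T \<longlongrightarrow> (\<chi> i. 1)) at_top" using vec_tendstoI[of T "\<chi> i. 1"] Tlim by simp
  have N: "real CARD('n) > 0" by simp
  have "((\<lambda>t. (\<Sum>i\<in>UNIV. R t $ i)) \<longlongrightarrow> (\<Sum>i\<in>(UNIV::'n set). 0)) at_top"
    by (intro tendsto_sum Rlim)
  then have A1: "((\<lambda>t. (\<Sum>i\<in>UNIV. R t $ i) / real CARD('n)) \<longlongrightarrow> 0) at_top"
    using tendsto_divide[OF _ tendsto_const, of _ 0 at_top "real CARD('n)"] N by simp
  have "((\<lambda>t. (\<Sum>i\<in>UNIV. T t $ i)) \<longlongrightarrow> (\<Sum>i\<in>(UNIV::'n set). 1)) at_top"
    by (intro tendsto_sum Tlim)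
  then have "((\<lambda>t. (\<Sum>i\<in>UNIV. T t $ i) / real CARD('n)) \<longlongrightarrow> real CARD('n) / real CARD('n)) at_top"
    using tendsto_divide[OF _ tendsto_const, of _ "real CARD('n)" at_top "real CARD('n)"] N by simp
  then have A2: "((\<lambda>t. (\<Sum>i\<in>UNIV. T t $ i) / real CARD('n)) \<longlongrightarrow> 1) at_top" using N by simp
  show ?thesis using RL TL A1 A2 by blast
qed

end
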